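(* Let $R$ be an infinite-dimensional affine algebra over a field $K$, let $\{e_i\}_{i\ge1}$ be a basis of $R$ over $K$, and let $S=\{r_1,\dots,r_s\}\subseteq R$. Suppose that for every $l$ and every choice of distinct basis elements $e_{i_1},\dots,e_{i_l}$, the $K$-span of $\{e_{i_t}r_j: 1\le t\le l,\ 1\le j\le s\}$ has dimension at least $2l$. Then there exist a partition $\{e_i\}_{i\ge1}=A_1\cup\cdots\cup A_m$ and elements $g_1,h_1,\dots,g_m,h_m\in S$ such that the sets $A_1g_1,A_1h_1,A_2g_2,A_2h_2,\dots,A_mg_m,A_mh_m$ are mutually independent.
   Context: An affine algebra is a finitely generated associative algebra over $K$, not necessarily unital. For $A\subseteq R$, $g\in R$, $Ag=\{ag:a\in A\}$. Subsets $B_1,\dots,B_k$ of $R$ are mutually independent if they are pairwise disjoint and their union is linearly independent over $K$. *)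

theory Defs
  imports Main "HOL.Vector_Spaces"
begin

definition algebra_over :: "('k::field \<Rightarrow> 'a::ring \<Rightarrow> 'a) \<Rightarrow> bool" where
  "algebra_over scale \<longleftrightarrow> module scale \<and>
     (\<forall>c x y. scale c (x * y) = scale c x * y \<and> scale c (x * y) = x * scale c y)"

inductive_set subalg_gen :: "('k::field \<Rightarrow> 'a::ring \<Rightarrow> 'a) \<Rightarrow> 'a set \<Rightarrow> 'a set"
  for scale :: "'k::field \<Rightarrow> 'a::ring \<Rightarrow> 'a" and G :: "'a set" where
  gen: "x \<in> G \<Longrightarrow> x \<in> subalg_gen scale G"
| zero: "0 \<in> subalg_gen scale G"
| add: "x \<in> subalg_gen scale G \<Longrightarrow> y \<in> subalg_gen scale G \<Longrightarrow> x + y \<in> subalg_gen scale G"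
| mult: "x \<in> subalg_gen scale G \<Longrightarrow> y \<in> subalg_gen scale G \<Longrightarrow> x * y \<in> subalg_gen scale G"
| smult: "x \<in> subalg_gen scale G \<Longrightarrow> scale c x \<in> subalg_gen scale G"

definition affine_algebra :: "('k::field \<Rightarrow> 'a::ring \<Rightarrow> 'a) \<Rightarrow> bool" where
  "affine_algebra scale \<longleftrightarrow> algebra_over scale \<and>
     (\<exists>G. finite G \<and> subalg_gen scale G = UNIV)"

definition mutually_independent ::
    "('k::field \<Rightarrow> 'a::ring \<Rightarrow> 'a) \<Rightarrow> 'i set \<Rightarrow> ('i \<Rightarrow> 'a set) \<Rightarrow> bool" where
  "mutually_independent scale I B \<longleftrightarrow>
     (\<forall>i\<in>I. \<forall>j\<in>I. i \<noteq> j \<longrightarrow> B i \<inter> B j = {}) \<and>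
     \<not> module.dependent scale (\<Union>i\<in>I. B i)"

end

theory Submission imports Defs begin

fun stg :: "((nat \<Rightarrow> 'b set) \<Rightarrow> bool) \<Rightarrow> (nat \<Rightarrow> 'b set) \<Rightarrow> nat \<Rightarrow> nat \<Rightarrow> 'b set" where
  "stg C T 0 = T"
| "stg C T (Suc n) = (stg C T n)(n := {SOME t. t \<in> stg C T n n \<and> C ((stg C T n)(n := {t}))})"

context vector_space begin

lemma indep_card_le_dim_fin:
  assumes "finite A" "I \<subseteq> A" "independent I" shows "card I \<le> dim A"
proof -
  obtain B where B: "B \<subseteq> A" "independent B" "A \<subseteq> span B" "card B = dim A"
    using basis_exists by blast
  have "finite B" using B(1) assms(1) finite_subset by blast
  have "I \<subseteq> span B" using assms(2) B(3) by blast
  from independent_span_bound[OF \<open>finite B\<close> assms(3) this] B(4) show ?thesis by simp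
qed

lemma dim_mono_fin: assumes "A \<subseteq> B" "finite B" shows "dim A \<le> dim B"
proof -
  obtain C where C: "C \<subseteq> A" "independent C" "A \<subseteq> span C" "card C = dim A"
    using basis_exists by blast
  show ?thesis using indep_card_le_dim_fin[OF assms(2) _ C(2)] C assms(1) by auto
qed

lemma dim_card_indep: assumes "finite X" "dim X = card X" shows "independent X"
proof -
  obtain B where B: "B \<subseteq> X" "independent B" "X \<subseteq> span B" "card B = dim X"
    using basis_exists by blast
  have "B = X" using B assms by (metis card_subset_eq)
  with B show ?thesis by simp
qed

lemma dim_submod:
  assumes "finite A" "finite B"
  shows "dim (A \<union> B) + dim (A \<inter> B) \<le> dim A + dim B"
proof -
  obtain C where C: "C \<subseteq> A \<inter> B" "independent C" "A \<inter> B \<subseteq> span C" "card C = dim (A \<inter> B)"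
    using basis_exists by blast
  obtain D where D: "C \<subseteq> D" "D \<subseteq> A \<union> B" "independent D" "A \<union> B \<subseteq> span D"
    using maximal_independent_subset_extend[of C "A \<union> B"] C by blast
  have fD: "finite D" using D(2) assms finite_subset by blast
  have cD: "card D = dim (A \<union> B)" using basis_card_eq_dim[OF D(2) D(4) D(3)] .
  have iDA: "independent (D \<inter> A)" "independent (D \<inter> B)" "independent (D \<inter> A \<inter> B)"
    using D(3) by (meson dependent_mono Int_lower1)+
  have "card (D \<inter> A \<inter> B) \<le> dim (A \<inter> B)"
    using indep_card_le_dim_fin[OF _ _ iDA(3)] assms by auto
  moreover have "C \<subseteq> D \<inter> A \<inter> B" using C D by auto
  moreover have "card C \<le> card (D \<inter> A \<inter> B)"
    using fD \<open>C \<subseteq> D \<inter> A \<inter> B\<close> by (intro card_mono) auto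
  ultimately have eqC: "card (D \<inter> A \<inter> B) = card C"
    using C(4) by linarith
  have "card (D \<inter> A) \<le> dim A" using indep_card_le_dim_fin[OF assms(1) _ iDA(1)] by auto
  moreover have "card (D \<inter> B) \<le> dim B" using indep_card_le_dim_fin[OF assms(2) _ iDA(2)] by auto
  moreover have "card (D \<inter> A) + card (D \<inter> B) = card D + card (D \<inter> A \<inter> B)"
  proof -
    have "card ((D \<inter> A) \<union> (D \<inter> B)) + card ((D \<inter> A) \<inter> (D \<inter> B)) = card (D \<inter> A) + card (D \<inter> B)"
      using card_Un_Int[of "D \<inter> A" "D \<inter> B"] fD by auto
    moreover have "(D \<inter> A) \<union> (D \<inter> B) = D" using D(2) by auto
    moreover have "(D \<inter> A) \<inter> (D \<inter> B) = D \<inter> A \<inter> B" by auto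
    ultimately show ?thesis by simp
  qed
  ultimately show ?thesis using cD eqC C(4) by linarith
qed

definition cond :: "('i \<Rightarrow> 'b set) \<Rightarrow> bool" where
  "cond T \<longleftrightarrow> (\<forall>I. finite I \<longrightarrow> card I \<le> dim (\<Union>i\<in>I. T i))"

lemma reduce:
  assumes c: "cond T" and fin: "\<And>i. finite (T i)" and xy: "x \<in> T j" "y \<in> T j" "x \<noteq> y"
  shows "cond (T(j := T j - {x})) \<or> cond (T(j := T j - {y}))"
proof (rule ccontr)
  assume "\<not> ?thesis"
  then obtain I J where I: "finite I" "card I > dim (\<Union>i\<in>I. (T(j := T j - {x})) i)"
    and J: "finite J" "card J > dim (\<Union>i\<in>J. (T(j := T j - {y})) i)"
    unfolding cond_def by (auto simp: not_le)
  have jI: "j \<in> I"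
  proof (rule ccontr)
    assume "j \<notin> I"
    then have "(\<Union>i\<in>I. (T(j := T j - {x})) i) = (\<Union>i\<in>I. T i)" by auto
    moreover have "card I \<le> dim (\<Union>i\<in>I. T i)" using c I(1) unfolding cond_def by blast
    ultimately show False using I(2) by simp
  qed
  have jJ: "j \<in> J"
  proof (rule ccontr)
    assume "j \<notin> J"
    then have "(\<Union>i\<in>J. (T(j := T j - {y})) i) = (\<Union>i\<in>J. T i)" by auto
    moreover have "card J \<le> dim (\<Union>i\<in>J. T i)" using c J(1) unfolding cond_def by blast
    ultimately show False using J(2) by simp
  qed
  define I' where "I' = I - {j}"
  define J' where "J' = J - {j}"
  define A where "A = (T j - {x}) \<union> (\<Union>i\<in>I'. T i)"
  define B where "B = (T j - {y}) \<union> (\<Union>i\<in>J'. T i)"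
  have fI': "finite I'" "finite J'" using I J I'_def J'_def by auto
  have A_eq: "A = (\<Union>i\<in>I. (T(j := T j - {x})) i)"
    unfolding A_def I'_def using jI by (auto split: if_splits)
  have B_eq: "B = (\<Union>i\<in>J. (T(j := T j - {y})) i)"
    unfolding B_def J'_def using jJ by (auto split: if_splits)
  have cI: "card I = Suc (card I')" using I(1) jI I'_def by (metis card_Suc_Diff1)
  have cJ: "card J = Suc (card J')" using J(1) jJ J'_def by (metis card_Suc_Diff1)
  have dA: "dim A \<le> card I'" using I(2) A_eq cI by simp
  have dB: "dim B \<le> card J'" using J(2) B_eq cJ by simp
  have fA: "finite A" "finite B" unfolding A_def B_def using fin fI' by auto
  have U: "(\<Union>i\<in>insert j (I' \<union> J'). T i) \<subseteq> A \<union> B"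
    unfolding A_def B_def using xy by auto
  have N: "(\<Union>i\<in>I' \<inter> J'. T i) \<subseteq> A \<inter> B"
    unfolding A_def B_def by auto
  have "card (insert j (I' \<union> J')) \<le> dim (\<Union>i\<in>insert j (I' \<union> J'). T i)"
    using c fI' unfolding cond_def by (meson finite_Un finite_insert)
  also have "\<dots> \<le> dim (A \<union> B)" using dim_mono_fin[OF U] fA by auto
  finally have 1: "card (insert j (I' \<union> J')) \<le> dim (A \<union> B)" .
  have "card (I' \<inter> J') \<le> dim (\<Union>i\<in>I' \<inter> J'. T i)"
    using c fI' unfolding cond_def by (meson finite_Int)
  also have "\<dots> \<le> dim (A \<inter> B)" using dim_mono_fin[OF N] fA by auto
  finally have 2: "card (I' \<inter> J') \<le> dim (A \<inter> B)" .
  have 3: "card (insert j (I' \<union> J')) = Suc (card (I' \<union> J'))"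
    using fI' I'_def J'_def by auto
  have 4: "card (I' \<union> J') + card (I' \<inter> J') = card I' + card J'"
    using card_Un_Int[OF fI'] by simp
  show False using 1 2 3 4 dA dB dim_submod[OF fA] by linarith
qed

lemma single:
  assumes "cond T" "\<And>i. finite (T i)"
  shows "\<exists>t\<in>T j. cond (T(j := {t}))"
  using assms
proof (induct "card (T j)" arbitrary: T rule: less_induct)
  case less
  show ?case
  proof (cases "card (T j) \<le> 1")
    case True
    show ?thesis
    proof (cases "T j = {}")
      case True
      have "card {j} \<le> dim (\<Union>i\<in>{j}. T i)" using less(2) unfolding cond_def by blast
      then have "1 \<le> dim ({}::'b set)" using True by simp
      moreover have "dim ({}::'b set) \<le> 0" using dim_le_card'[of "{}"] by simp
      ultimately show ?thesis by simp
    next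
      case False
      then obtain t where t: "t \<in> T j" by blast
      have "\<forall>a\<in>T j. \<forall>b\<in>T j. a = b" using True less(3)[of j] card_le_Suc0_iff_eq[of "T j"] by simp
      then have "T j = {t}" using t by blast
      then have "T(j := {t}) = T" by (rule fun_upd_idem)
      then show ?thesis using less(2) t by (intro bexI[of _ t]) simp_all
    qed
  next
    case False
    have "\<not> (\<forall>a\<in>T j. \<forall>b\<in>T j. a = b)" using False less(3)[of j] card_le_Suc0_iff_eq[of "T j"] by simp
    then obtain x y where xy: "x \<in> T j" "y \<in> T j" "x \<noteq> y" by blast
    from reduce[OF less(2) less(3) xy] obtain z where z: "z \<in> T j" "cond (T(j := T j - {z}))"
      using xy by blast
    let ?T = "T(j := T j - {z})"
    have "card (?T j) < card (T j)" using card_Diff1_less[OF less(3)[of j] z(1)] by simp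
    moreover have "\<And>i. finite (?T i)" using less(3) by auto
    ultimately obtain t where "t \<in> ?T j" "cond (?T(j := {t}))"
      using less(1)[of ?T] z(2) by blast
    then show ?thesis by auto
  qed
qed

end
context vector_space begin

lemma limit:
  fixes T :: "nat \<Rightarrow> 'b set"
  assumes c: "cond T" and fin: "\<And>i. finite (T i)"
  shows "\<exists>t. (\<forall>n. t n \<in> T n) \<and> inj t \<and> independent (range t)"
proof -
  let ?s = "stg cond T"
  have inv: "cond (?s n) \<and> (\<forall>i. finite (?s n i)) \<and> (\<forall>i. ?s n i \<subseteq> T i)" for n
  proof (induct n)
    case 0 then show ?case using c fin by simp
  next
    case (Suc n)
    then have "\<exists>t. t \<in> ?s n n \<and> cond ((?s n)(n := {t}))" using single[of "?s n" n] by blast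
    define x where "x = (SOME t. t \<in> ?s n n \<and> cond ((?s n)(n := {t})))"
    have "x \<in> ?s n n \<and> cond ((?s n)(n:={x}))" unfolding x_def by (rule someI_ex) fact
    then have x: "x \<in> ?s n n" "cond ((?s n)(n:={x}))" by blast+
    have eq: "?s (Suc n) = (?s n)(n:={x})" unfolding x_def by simp
    have fs: "\<forall>i. finite (?s (Suc n) i)" "\<forall>i. ?s (Suc n) i \<subseteq> T i"
      unfolding eq using Suc x(1) by auto
    have "cond (?s (Suc n))" unfolding eq by (rule x(2))
    then show ?case using fs by blast
  qed
  have stable: "i < n \<Longrightarrow> ?s n i = ?s (Suc i) i" for i n
  proof (induct n)
    case 0 then show ?case by simp
  next
    case (Suc n)
    then show ?case by (cases "i = n") auto
  qed
  define t where "t i = (SOME t. t \<in> ?s i i \<and> cond ((?s i)(i := {t})))" for i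
  have sS: "?s (Suc i) i = {t i}" for i by (simp add: t_def)
  have tT: "t i \<in> T i" for i
  proof -
    have "?s (Suc i) i \<subseteq> T i" using inv by blast
    then show ?thesis unfolding sS by simp
  qed
  have key: "card I \<le> dim (t ` I)" if "finite I" for I
  proof -
    define N where "N = Suc (Max (insert 0 I))"
    have iN: "i < N" if "i \<in> I" for i using that \<open>finite I\<close> N_def by (simp add: le_imp_less_Suc)
    have "?s N i = {t i}" if "i \<in> I" for i using stable[OF iN[OF that]] sS[of i] by simp
    then have "\<forall>i\<in>I. ?s N i = {t i}" by blast
    then have "(\<Union>i\<in>I. ?s N i) = (\<Union>i\<in>I. {t i})" by (metis (no_types, lifting) SUP_cong)
    then have eqU: "(\<Union>i\<in>I. ?s N i) = t ` I" by blast
    have "cond (?s N)" using inv[of N] by blast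
    then have "card I \<le> dim (\<Union>i\<in>I. ?s N i)" using that unfolding cond_def by blast
    then show ?thesis unfolding eqU .
  qed
  have injT: "inj_on t I" and indI: "independent (t ` I)" if "finite I" for I
  proof -
    have "dim (t ` I) \<le> card (t ` I)" using dim_le_card' that by blast
    moreover have "card (t ` I) \<le> card I" using card_image_le that by blast
    ultimately have "card (t ` I) = card I" "dim (t ` I) = card (t ` I)" using key[OF that] by linarith+
    then show "inj_on t I" "independent (t ` I)"
      using inj_on_iff_eq_card[OF that] dim_card_indep that by auto
  qed
  have "inj t"
  proof (rule injI)
    fix x y assume "t x = t y"
    moreover have "inj_on t {x, y}" using injT[of "{x, y}"] by simp
    ultimately show "x = y" unfolding inj_on_def by blast
  qed
  moreover have "independent (range t)"
  proof
    assume "dependent (range t)"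
    then obtain S u where S: "finite S" "S \<subseteq> range t" "\<exists>v\<in>S. u v \<noteq> 0" "(\<Sum>v\<in>S. u v *s v) = 0"
      unfolding dependent_explicit by blast
    then have "dependent S" unfolding dependent_explicit by blast
    obtain I where "I \<subseteq> UNIV" "finite I" "S = t ` I" using finite_subset_image[OF S(1) S(2)] by blast
    then show False using indI[OF \<open>finite I\<close>] \<open>dependent S\<close> by simp
  qed
  ultimately show ?thesis using tT by blast
qed

end

theorem proposition3:
  fixes scale :: "'k::field \<Rightarrow> 'a::ring \<Rightarrow> 'a"
    and e :: "nat \<Rightarrow> 'a"
    and S :: "'a set"
  assumes alg: "affine_algebra scale"
    and infdim: "\<not> (\<exists>B. finite B \<and> module.span scale B = UNIV)"
    and inj: "inj e"
    and basis_indep: "\<not> module.dependent scale (range e)"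
    and basis_span: "module.span scale (range e) = UNIV"
    and S_fin: "finite S"
    and growth: "\<And>F. finite F \<Longrightarrow> F \<subseteq> range e \<Longrightarrow>
        vector_space.dim scale {f * r | f r. f \<in> F \<and> r \<in> S} \<ge> 2 * card F"
  shows "\<exists>(m::nat) (A :: nat \<Rightarrow> 'a set) (g :: nat \<Rightarrow> 'a) (h :: nat \<Rightarrow> 'a).
           (\<Union>k<m. A k) = range e \<and>
           (\<forall>k<m. A k \<noteq> {}) \<and>
           (\<forall>k<m. \<forall>k'<m. k \<noteq> k' \<longrightarrow> A k \<inter> A k' = {}) \<and>
           (\<forall>k<m. g k \<in> S \<and> h k \<in> S) \<and>
           mutually_independent scale ({..<m} \<times> (UNIV :: bool set))
             (\<lambda>(k, b). if b then (\<lambda>a. a * g k) ` A k else (\<lambda>a. a * h k) ` A k)"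
  proof -
  have "module scale" using alg unfolding affine_algebra_def algebra_over_def by blast
  then interpret V: vector_space scale by (simp add: module_iff_vector_space)
  define T where "T n = (\<lambda>r. e (n div 2) * r) ` S" for n
  have finT: "\<And>n. finite (T n)" unfolding T_def using S_fin by simp
  have cT: "V.cond T" unfolding V.cond_def
  proof (intro allI impI)
    fix I :: "nat set" assume fI: "finite I"
    define D where "D = (\<lambda>n. n div 2) ` I"
    define F where "F = e ` D"
    have fD: "finite D" using fI D_def by simp
    have U: "(\<Union>i\<in>I. T i) = {f * r | f r. f \<in> F \<and> r \<in> S}"
      unfolding T_def F_def D_def by blast
    have "I \<subseteq> (\<lambda>(q, b). 2 * q + b) ` (D \<times> {0, 1})"
    proof
      fix n assume "n \<in> I"
      then have "(n div 2, n mod 2) \<in> D \<times> {0, 1}" unfolding D_def by auto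
      moreover have "n = (\<lambda>(q, b). 2 * q + b) (n div 2, n mod 2)" by simp
      ultimately show "n \<in> (\<lambda>(q, b). 2 * q + b) ` (D \<times> {0, 1})" by (rule image_eqI[rotated])
    qed
    then have "card I \<le> card ((\<lambda>(q, b). 2 * q + b) ` (D \<times> {0::nat, 1}))"
      using fD by (intro card_mono) auto
    also have "\<dots> \<le> card (D \<times> {0::nat, 1})" using fD by (intro card_image_le) auto
    also have "\<dots> = 2 * card D" by (simp add: card_cartesian_product)
    also have "card D = card F" unfolding F_def using inj
      by (metis card_image inj_on_subset subset_UNIV)
    also have "2 * card F \<le> V.dim {f * r | f r. f \<in> F \<and> r \<in> S}"
      using growth[of F] fD unfolding F_def by auto
    finally show "card I \<le> V.dim (\<Union>i\<in>I. T i)" using U by simp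
  qed
  obtain t where tT: "\<forall>n. t n \<in> T n" and tinj: "inj t" and tind: "\<not> V.dependent (range t)"
    using V.limit[OF cT finT] by blast
  have "\<forall>n. \<exists>r. r \<in> S \<and> t n = e (n div 2) * r" using tT unfolding T_def by blast
  then obtain s where s: "\<And>n. s n \<in> S" "\<And>n. t n = e (n div 2) * s n" by metis
  define p where "p i = (s (2*i), s (2*i+1))" for i
  define P where "P = range p"
  have fP: "finite P" unfolding P_def p_def
    by (rule finite_subset[of _ "S \<times> S"]) (use s(1) S_fin in auto)
  obtain f where f: "bij_betw f {0..<card P} P" using ex_bij_betw_nat_finite[OF fP] by blast
  define m where "m = card P"
  define A where "A k = e ` {i. p i = f k}" for k
  define g where "g k = fst (f k)" for k
  define h where "h k = snd (f k)" for k
  have fin: "f k \<in> P" if "k < m" for k using f that m_def by (auto simp: bij_betw_def)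
  have finj: "k = k'" if "k < m" "k' < m" "f k = f k'" for k k'
    using f that m_def by (auto simp: bij_betw_def inj_on_def)
  have c1: "(\<Union>k<m. A k) = range e"
  proof
    show "(\<Union>k<m. A k) \<subseteq> range e" unfolding A_def by auto
    show "range e \<subseteq> (\<Union>k<m. A k)"
    proof
      fix x assume "x \<in> range e"
      then obtain i where i: "x = e i" by blast
      have "p i \<in> f ` {0..<m}" using f m_def P_def by (auto simp: bij_betw_def)
      then obtain k where k: "k < m" "f k = p i" by auto
      then have "x \<in> A k" unfolding A_def i by auto
      then show "x \<in> (\<Union>k<m. A k)" using k(1) by blast
    qed
  qed
  have c2: "\<forall>k<m. A k \<noteq> {}" using fin unfolding A_def P_def by fastforce
  have c3: "\<forall>k<m. \<forall>k'<m. k \<noteq> k' \<longrightarrow> A k \<inter> A k' = {}"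
  proof (intro allI impI)
    fix k k' assume kk: "k < m" "k' < m" "k \<noteq> k'"
    show "A k \<inter> A k' = {}"
    proof (rule ccontr)
      assume "A k \<inter> A k' \<noteq> {}"
      then obtain i i' where "p i = f k" "p i' = f k'" "e i = e i'" unfolding A_def by blast
      then have "f k = f k'" using inj by (metis injD)
      then show False using finj kk by blast
    qed
  qed
  have c4: "\<forall>k<m. g k \<in> S \<and> h k \<in> S"
  proof (intro allI impI)
    fix k assume "k < m"
    then obtain i where "f k = p i" using fin P_def by auto
    then show "g k \<in> S \<and> h k \<in> S" unfolding g_def h_def p_def using s(1) by simp
  qed
  define Q where "Q = (\<lambda>(k, b). (\<lambda>i. 2 * i + (if b then 0 else 1)) ` {i. p i = f k})"
  have BQ: "(\<lambda>(k, b). if b then (\<lambda>a. a * g k) ` A k else (\<lambda>a. a * h k) ` A k) kb = t ` Q kb" for kb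
  proof -
    obtain k b where kb: "kb = (k, b)" by (cases kb)
    have t0: "t (2 * i) = e i * s (2 * i)" for i using s(2)[of "2*i"] by simp
    have t1: "t (2 * i + 1) = e i * s (2 * i + 1)" for i using s(2)[of "2*i+1"] by simp
    show ?thesis
    proof (cases b)
      case True
      have "(\<lambda>a. a * g k) ` A k = t ` Q (k, b)"
        unfolding A_def Q_def g_def using True t0
        by (auto simp: p_def image_iff) (metis fst_conv)+
      then show ?thesis using kb True by simp
    next
      case False
      have "(\<lambda>a. a * h k) ` A k = t ` Q (k, b)"
        unfolding A_def Q_def h_def using False t1
        by (auto simp: p_def image_iff) (metis snd_conv)+
      then show ?thesis using kb False by simp
    qed
  qed
  have Qdisj: "Q x \<inter> Q y = {}" if "x \<in> {..<m} \<times> (UNIV :: bool set)" "y \<in> {..<m} \<times> (UNIV :: bool set)" "x \<noteq> y" for x y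
  proof (rule ccontr)
    obtain k b k' b' where xy: "x = (k, b)" "y = (k', b')" by (cases x, cases y)
    assume "Q x \<inter> Q y \<noteq> {}"
    then obtain i i' where ii: "p i = f k" "p i' = f k'"
      "2 * i + (if b then 0 else 1) = 2 * i' + (if b' then (0::nat) else 1)"
      unfolding Q_def xy by auto
    have "b = b'" using ii(3) by (cases b; cases b'; simp; presburger)
    then have "i = i'" using ii(3) by simp
    then have "k = k'" using ii finj that xy by auto
    then show False using \<open>b = b'\<close> xy that by simp
  qed
  have c5: "mutually_independent scale ({..<m} \<times> (UNIV :: bool set))
             (\<lambda>(k, b). if b then (\<lambda>a. a * g k) ` A k else (\<lambda>a. a * h k) ` A k)"
    unfolding mutually_independent_def BQ
  proof (intro conjI ballI impI)
    fix x y assume "x \<in> {..<m} \<times> (UNIV :: bool set)" "y \<in> {..<m} \<times> (UNIV :: bool set)" "x \<noteq> y"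
    then show "t ` Q x \<inter> t ` Q y = {}" using Qdisj tinj by (simp add: image_Int[symmetric])
  next
    show "\<not> V.dependent (\<Union>x\<in>{..<m} \<times> UNIV. t ` Q x)"
      using tind V.dependent_mono[of "\<Union>x\<in>{..<m} \<times> UNIV. t ` Q x" "range t"] by blast
  qed
  show ?thesis using c1 c2 c3 c4 c5 by blast
qed

end
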